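(* Let $\rho_n$ be a density operator on a finite-dimensional Hilbert space $\mathcal{H}_n$, let $\mathcal{C}_n$ be a CPTP map from states on $\mathcal{H}_n$ to states on a subspace $\widetilde{\mathcal{H}}_n\subseteq\mathcal{H}_n$ of dimension $M_n$, and let $\mathcal{D}_n$ be a CPTP map from states on $\widetilde{\mathcal{H}}_n$ to states on $\mathcal{H}_n$. Then for every real $\gamma$, \[ F(\rho_n,\mathcal{D}_n\circ\mathcal{C}_n)\le \mathrm{Tr}\big[\{\rho_n\ge e^{-n\gamma}I_n\}(\rho_n-e^{-n\gamma}I_n)\big]+e^{-n\gamma}M_n . \]
   Context: Spectral projections: for self-adjoint $A=\sum_i\lambda_i|i\rangle\langle i|$, $\{A\ge0\}:=\sum_{\lambda_i\ge0}|i\rangle\langle i|$ and $\{A\ge B\}:=\{A-B\ge0\}$. The entanglement fidelity of a state $\rho$ and a quantum operation $\mathcal{T}$ with Kraus operators $\{T_k\}$ is $F(\rho,\mathcal{T})=\sum_k|\mathrm{Tr}(T_k\rho)|^2$; $I_n$ is the identity on $\mathcal{H}_n$. *)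

theory Defs
  imports Complex_Main "Jordan_Normal_Form.Schur_Decomposition"
begin

definition mtrace :: "complex mat \<Rightarrow> complex" where
  "mtrace A = (\<Sum>i<dim_row A. A $$ (i,i))"

definition hermitian_mat :: "nat \<Rightarrow> complex mat \<Rightarrow> bool" where
  "hermitian_mat d A \<longleftrightarrow> A \<in> carrier_mat d d \<and> mat_adjoint A = A"

(* positive semidefinite: Hermitian with <v, A v> >= 0 (the form is real for Hermitian A) *)
definition psd_mat :: "nat \<Rightarrow> complex mat \<Rightarrow> bool" where
  "psd_mat d A \<longleftrightarrow> hermitian_mat d A \<and>
     (\<forall>v \<in> carrier_vec d. 0 \<le> Re ((A *\<^sub>v v) \<bullet>c v))"

definition density_op :: "nat \<Rightarrow> complex mat \<Rightarrow> bool" where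
  "density_op d \<rho> \<longleftrightarrow> psd_mat d \<rho> \<and> mtrace \<rho> = 1"

definition unitary_mat :: "nat \<Rightarrow> complex mat \<Rightarrow> bool" where
  "unitary_mat d U \<longleftrightarrow> U \<in> carrier_mat d d \<and> mat_adjoint U * U = 1\<^sub>m d"

definition spec_proj_nonneg :: "complex mat \<Rightarrow> complex mat" where
  "spec_proj_nonneg A = (SOME P. \<exists>U (lam :: nat \<Rightarrow> real).
      unitary_mat (dim_row A) U \<and>
      A = U * mat_diag (dim_row A) (\<lambda>i. complex_of_real (lam i)) * mat_adjoint U \<and>
      P = U * mat_diag (dim_row A) (\<lambda>i. if lam i \<ge> 0 then 1 else 0) * mat_adjoint U)"

definition spec_proj_ge :: "complex mat \<Rightarrow> complex mat \<Rightarrow> complex mat" where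
  "spec_proj_ge A B = spec_proj_nonneg (A - B)"

definition cptp_kraus :: "nat \<Rightarrow> nat \<Rightarrow> complex mat list \<Rightarrow> bool" where
  "cptp_kraus din dout Ks \<longleftrightarrow> (\<forall>K \<in> set Ks. K \<in> carrier_mat dout din) \<and>
     foldr (\<lambda>K S. mat_adjoint K * K + S) Ks (0\<^sub>m din din) = 1\<^sub>m din"

definition kraus_compose :: "complex mat list \<Rightarrow> complex mat list \<Rightarrow> complex mat list" where
  "kraus_compose Ds Cs = [D * C. D \<leftarrow> Ds, C \<leftarrow> Cs]"

definition ent_fidelity :: "complex mat \<Rightarrow> complex mat list \<Rightarrow> real" where
  "ent_fidelity \<rho> Ts = (\<Sum>T \<leftarrow> Ts. (cmod (mtrace (T * \<rho>)))\<^sup>2)"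

end

theory Submission
  imports Defs
begin


lemma adj_dims[simp]: "dim_row (mat_adjoint A) = dim_col A" "dim_col (mat_adjoint A) = dim_row A"
  unfolding mat_adjoint_def by (simp_all add: mat_of_rows_def)

lemma adj_carrier[simp]: "A \<in> carrier_mat n m \<Longrightarrow> mat_adjoint A \<in> carrier_mat m n"
  by (intro carrier_matI) auto

lemma adj_index[simp]: "i < dim_col A \<Longrightarrow> j < dim_row A \<Longrightarrow> mat_adjoint A $$ (i,j) = cnj (A $$ (j,i))"
  unfolding mat_adjoint_def by (simp add: mat_of_rows_def)

lemma adj_adj[simp]: "mat_adjoint (mat_adjoint (A::complex mat)) = A"
  by (rule eq_matI) auto

lemma mult_index: "A \<in> carrier_mat n k \<Longrightarrow> B \<in> carrier_mat k m \<Longrightarrow> i < n \<Longrightarrow> j < m \<Longrightarrow>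
   (A * B) $$ (i,j) = (\<Sum>l<k. A $$ (i,l) * B $$ (l,j))"
  by (auto simp: scalar_prod_def atLeast0LessThan intro!: sum.cong)

lemma adj_mult: assumes A: "(A::complex mat) \<in> carrier_mat n k" and B: "B \<in> carrier_mat k m"
  shows "mat_adjoint (A * B) = mat_adjoint B * mat_adjoint A"
proof (rule eq_matI)
  fix i j assume "i < dim_row (mat_adjoint B * mat_adjoint A)" "j < dim_col (mat_adjoint B * mat_adjoint A)"
  then have ij: "i < m" "j < n" using assms by auto
  have "mat_adjoint (A * B) $$ (i, j) = cnj ((A * B) $$ (j,i))"
    using ij A B by (intro adj_index) auto
  also have "\<dots> = cnj (\<Sum>l<k. A $$ (j,l) * B $$ (l,i))"
    using ij A B by (subst mult_index) auto
  also have "\<dots> = (\<Sum>l<k. mat_adjoint B $$ (i,l) * mat_adjoint A $$ (l,j))"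
    using ij A B by (auto simp: mult.commute intro!: sum.cong)
  also have "\<dots> = (mat_adjoint B * mat_adjoint A) $$ (i, j)"
    using ij A B by (subst mult_index[of _ m k _ n]) auto
  finally show "mat_adjoint (A * B) $$ (i, j) = (mat_adjoint B * mat_adjoint A) $$ (i, j)" .
qed (use assms in auto)

lemma mult_diag_index: assumes "X \<in> carrier_mat p n" "i < p" "l < n"
  shows "(X * mat_diag n f) $$ (i,l) = X $$ (i,l) * f l"
proof -
  have "(X * mat_diag n f) $$ (i,l) = (\<Sum>q<n. X $$ (i,q) * mat_diag n f $$ (q,l))"
    using assms by (intro mult_index) auto
  also have "\<dots> = (\<Sum>q<n. if q = l then X $$ (i,l) * f l else 0)"
    using assms by (intro sum.cong) (auto simp: mat_diag_def)
  also have "\<dots> = X $$ (i,l) * f l" using assms by simp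
  finally show ?thesis .
qed

lemma mult_diag_mult_index: assumes X: "X \<in> carrier_mat p n" and Y: "Y \<in> carrier_mat n q" and "i < p" "j < q"
  shows "(X * mat_diag n f * Y) $$ (i,j) = (\<Sum>l<n. X $$ (i,l) * f l * Y $$ (l,j))"
proof -
  have "(X * mat_diag n f * Y) $$ (i,j) = (\<Sum>l<n. (X * mat_diag n f) $$ (i,l) * Y $$ (l,j))"
    using assms by (intro mult_index[of _ p n]) auto
  also have "\<dots> = (\<Sum>l<n. X $$ (i,l) * f l * Y $$ (l,j))"
    using assms by (intro sum.cong) (auto simp: mult_diag_index)
  finally show ?thesis .
qed

lemma cscalar_real: fixes w :: "complex vec"
  shows "w \<bullet>c w = complex_of_real (Re (w \<bullet>c w))" "Re (w \<bullet>c w) \<ge> 0"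
  using conjugate_square_ge_0_vec[of w] by (auto simp: less_eq_complex_def complex_eq_iff)


lemma spectral:
  fixes A :: "complex mat"
  assumes "A \<in> carrier_mat n n" "mat_adjoint A = A"
  shows "\<exists>U lam. unitary_mat n U \<and> A = U * mat_diag n (\<lambda>i. complex_of_real (lam i)) * mat_adjoint U"
  using assms
proof (induction n arbitrary: A)
  case 0
  show ?case
    by (rule exI[of _ "1\<^sub>m 0"], rule exI[of _ "\<lambda>_. 0"])
       (use 0 in \<open>auto simp: unitary_mat_def intro!: eq_matI\<close>)
next
  case (Suc m A)
  define n where "n = Suc m"
  have "0 < n" unfolding n_def by simp
  have A: "A \<in> carrier_mat n n" and herm: "mat_adjoint A = A" using Suc.prems n_def by auto
  have "degree (char_poly A) = n" using degree_monic_char_poly[OF A] by auto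
  then obtain e where "poly (char_poly A) e = 0"
    using alg_closed_imp_poly_has_root[of "char_poly A"] n_def by auto
  then have "eigenvalue A e" using eigenvalue_root_char_poly[OF A] by auto
  then obtain v where ev: "eigenvector A v e" unfolding eigenvalue_def by auto
  then have v: "v \<in> carrier_vec n" and v0: "v \<noteq> 0\<^sub>v n" and Av: "A *\<^sub>v v = e \<cdot>\<^sub>v v"
    using A unfolding eigenvector_def by auto
  interpret cof_vec_space n "TYPE(complex)" .
  define b where "b = basis_completion v"
  from basis_completion[OF v v0, folded b_def]
  have dist_b: "distinct b" and indep: "\<not> lin_dep (set b)" and b: "set b \<subseteq> carrier_vec n"
    and hdb: "hd b = v" and len_b: "length b = n" by auto
  from hdb len_b n_def obtain vs where bv: "b = v # vs" by (cases b, auto)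
  define ws where "ws = gram_schmidt n b"
  from gram_schmidt_result[OF b dist_b indep ws_def]
  have ws: "set ws \<subseteq> carrier_vec n" "corthogonal ws" "length ws = n" by (auto simp: len_b)
  have "hd ws = v" using gram_schmidt_hd[OF v, of vs] unfolding ws_def bv .
  then have ws0: "ws ! 0 = v" using ws(3) n_def by (cases ws) auto
  have wsc: "ws ! j \<in> carrier_vec n" if "j < n" for j using ws that by auto
  have orth: "ws ! i \<bullet>c ws ! j = 0 \<longleftrightarrow> i \<noteq> j" if "i < n" "j < n" for i j
    using ws(2) ws(3) that unfolding corthogonal_def by auto
  define s where "s j = sqrt (Re (ws ! j \<bullet>c ws ! j))" for j
  have s2: "ws ! j \<bullet>c ws ! j = complex_of_real (s j) * complex_of_real (s j)" if "j < n" for j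
  proof -
    have r: "Re (ws ! j \<bullet>c ws ! j) \<ge> 0" by (rule cscalar_real)
    have ss: "s j * s j = Re (ws ! j \<bullet>c ws ! j)" unfolding s_def using r by simp
    have "complex_of_real (s j) * complex_of_real (s j) = complex_of_real (Re (ws ! j \<bullet>c ws ! j))"
      by (simp only: of_real_mult[symmetric] ss)
    then show ?thesis using cscalar_real(1)[of "ws ! j"] by simp
  qed
  have s0: "s j \<noteq> 0" if "j < n" for j
  proof
    assume "s j = 0"
    then have "ws ! j \<bullet>c ws ! j = 0" using s2[OF that] by simp
    with orth[OF that that] show False by simp
  qed
  define W where "W = mat n n (\<lambda>(i,j). ws ! j $ i / complex_of_real (s j))"
  have W: "W \<in> carrier_mat n n" unfolding W_def by auto
  have WW_index: "(mat_adjoint W * W) $$ (i,j) = (ws ! j \<bullet>c ws ! i) / (complex_of_real (s i) * complex_of_real (s j))"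
    if ij: "i < n" "j < n" for i j
  proof -
    have "(mat_adjoint W * W) $$ (i,j) = (\<Sum>l<n. mat_adjoint W $$ (i,l) * W $$ (l,j))"
      using W ij by (intro mult_index[of _ n n _ n]) auto
    also have "\<dots> = (\<Sum>l<n. ws ! j $ l * cnj (ws ! i $ l) / (complex_of_real (s i) * complex_of_real (s j)))"
      using W ij by (intro sum.cong) (auto simp: W_def)
    also have "\<dots> = (ws ! j \<bullet>c ws ! i) / (complex_of_real (s i) * complex_of_real (s j))"
      using wsc[OF ij(1)] wsc[OF ij(2)]
      by (simp add: scalar_prod_def sum_divide_distrib atLeast0LessThan)
    finally show ?thesis .
  qed
  have WW: "mat_adjoint W * W = 1\<^sub>m n"
  proof (rule eq_matI)
    fix i j assume "i < dim_row (1\<^sub>m n)" "j < dim_col (1\<^sub>m n)"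
    then have ij: "i < n" "j < n" by auto
    show "(mat_adjoint W * W) $$ (i,j) = 1\<^sub>m n $$ (i,j)"
      using ij s0[OF ij(1)] unfolding WW_index[OF ij]
      by (cases "i = j") (auto simp: s2 orth)
  qed (use W in auto)
  have WWt: "W * mat_adjoint W = 1\<^sub>m n"
    using mat_mult_left_right_inverse[OF _ W WW] W by auto
  have AW0: "(A * W) $$ (l,0) = e * W $$ (l,0)" if l: "l < n" for l
  proof -
    have "(A * W) $$ (l,0) = (\<Sum>k<n. A $$ (l,k) * W $$ (k,0))"
      using A W l n_def by (intro mult_index[of _ n n _ n]) auto
    also have "\<dots> = (\<Sum>k<n. A $$ (l,k) * v $ k) / complex_of_real (s 0)"
      using \<open>0 < n\<close> by (simp add: W_def ws0 sum_divide_distrib)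
    also have "(\<Sum>k<n. A $$ (l,k) * v $ k) = (A *\<^sub>v v) $ l"
      using A v l by (auto simp: scalar_prod_def atLeast0LessThan intro!: sum.cong)
    also have "\<dots> = e * v $ l" using Av v l by simp
    finally show ?thesis using l n_def by (simp add: W_def ws0)
  qed
  define B where "B = mat_adjoint W * (A * W)"
  have B: "B \<in> carrier_mat n n" unfolding B_def using A W by auto
  have Bherm: "mat_adjoint B = B"
  proof -
    have "mat_adjoint B = mat_adjoint (A * W) * W"
      unfolding B_def using A W by (subst adj_mult[of _ n n _ n]) auto
    also have "\<dots> = (mat_adjoint W * A) * W"
      using A W herm by (subst adj_mult[of _ n n _ n]) auto
    also have "\<dots> = B" unfolding B_def using assoc_mult_mat[of "mat_adjoint W" n n A n W n] A W by auto
    finally show ?thesis .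
  qed
  have Bsym: "B $$ (i,j) = cnj (B $$ (j,i))" if "i < n" "j < n" for i j
  proof -
    have "B $$ (i,j) = mat_adjoint B $$ (i,j)" using Bherm by simp
    also have "\<dots> = cnj (B $$ (j,i))" using B that by (intro adj_index) auto
    finally show ?thesis .
  qed
  have B0: "B $$ (i,0) = (if i = 0 then e else 0)" if i: "i < n" for i
  proof -
    have "B $$ (i,0) = (\<Sum>l<n. mat_adjoint W $$ (i,l) * (A * W) $$ (l,0))"
      unfolding B_def using A W i n_def by (intro mult_index[of _ n n _ n]) auto
    also have "\<dots> = e * (\<Sum>l<n. mat_adjoint W $$ (i,l) * W $$ (l,0))"
      by (simp add: AW0 sum_distrib_left mult_ac)
    also have "\<dots> = e * (mat_adjoint W * W) $$ (i,0)"
      using W i n_def by (subst mult_index[of _ n n _ n]) auto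
    finally show ?thesis using i n_def WW by auto
  qed
  have e_real: "e = complex_of_real (Re e)"
  proof -
    have "e = cnj e" using Bsym[of 0 0] B0[of 0] \<open>0 < n\<close> by simp
    then show ?thesis by (simp add: complex_eq_iff)
  qed
  have B0': "B $$ (0,j) = (if j = 0 then e else 0)" if j: "j < n" for j
  proof -
    have "B $$ (0,j) = cnj (B $$ (j,0))" using Bsym[of 0 j] j \<open>0 < n\<close> by blast
    then show ?thesis using B0[OF j] e_real by (auto simp: complex_eq_iff)
  qed
  define A3 where "A3 = mat m m (\<lambda>(i,j). B $$ (Suc i, Suc j))"
  have A3: "A3 \<in> carrier_mat m m" unfolding A3_def by auto
  have A3herm: "mat_adjoint A3 = A3"
  proof (rule eq_matI)
    fix i j assume "i < dim_row A3" "j < dim_col A3"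
    then have ij: "i < m" "j < m" using A3 by auto
    have "B $$ (Suc i, Suc j) = cnj (B $$ (Suc j, Suc i))" using Bsym[of "Suc i" "Suc j"] ij n_def by blast
    then show "mat_adjoint A3 $$ (i, j) = A3 $$ (i, j)" using ij A3 by (simp add: A3_def)
  qed (use A3 in auto)
  from Suc.IH[OF A3 A3herm] obtain U3 lam3 where U3: "unitary_mat m U3"
    and A3eq: "A3 = U3 * mat_diag m (\<lambda>i. complex_of_real (lam3 i)) * mat_adjoint U3" by blast
  have U3c: "U3 \<in> carrier_mat m m" using U3 unfolding unitary_mat_def by auto
  have U3U3: "(\<Sum>l<m. cnj (U3 $$ (l,i)) * U3 $$ (l,j)) = (if i = j then 1 else 0)"
    if "i < m" "j < m" for i j
  proof -
    have "(\<Sum>l<m. cnj (U3 $$ (l,i)) * U3 $$ (l,j)) = (mat_adjoint U3 * U3) $$ (i,j)"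
      using U3c that by (subst mult_index[of _ m m _ m]) auto
    then show ?thesis using U3 that unfolding unitary_mat_def by auto
  qed
  have D3: "(\<Sum>l<m. U3 $$ (i,l) * complex_of_real (lam3 l) * cnj (U3 $$ (j,l))) = B $$ (Suc i, Suc j)"
    if "i < m" "j < m" for i j
  proof -
    have "(\<Sum>l<m. U3 $$ (i,l) * complex_of_real (lam3 l) * cnj (U3 $$ (j,l)))
        = (U3 * mat_diag m (\<lambda>i. complex_of_real (lam3 i)) * mat_adjoint U3) $$ (i,j)"
      using U3c that by (subst mult_diag_mult_index[of _ m m _ m]) auto
    moreover have "A3 $$ (i,j) = B $$ (Suc i, Suc j)" using that by (simp add: A3_def)
    ultimately show ?thesis using A3eq by simp
  qed
  define V where "V = mat n n (\<lambda>(i,j). if i = 0 then (if j = 0 then 1 else 0)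
      else if j = 0 then 0 else U3 $$ (i - 1, j - 1))"
  have V: "V \<in> carrier_mat n n" unfolding V_def by auto
  have Vrow0: "V $$ (0, j) = (if j = 0 then 1 else 0)" if "j < n" for j
    using that \<open>0 < n\<close> by (simp add: V_def)
  have Vrow: "V $$ (Suc l, j) = (if j = 0 then 0 else U3 $$ (l, j - 1))" if "l < m" "j < n" for l j
    using that by (simp add: V_def n_def)
  have Vcol0: "V $$ (i, 0) = (if i = 0 then 1 else 0)" if "i < n" for i
    using that \<open>0 < n\<close> by (simp add: V_def)
  have Vcol: "V $$ (i, Suc l) = (if i = 0 then 0 else U3 $$ (i - 1, l))" if "l < m" "i < n" for l i
    using that by (simp add: V_def n_def)
  have VV: "mat_adjoint V * V = 1\<^sub>m n"
  proof (rule eq_matI)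
    fix i j assume "i < dim_row (1\<^sub>m n)" "j < dim_col (1\<^sub>m n)"
    then have ij: "i < n" "j < n" by auto
    have "(mat_adjoint V * V) $$ (i,j) = (\<Sum>l<n. cnj (V $$ (l,i)) * V $$ (l,j))"
      using V ij by (subst mult_index[of _ n n _ n]) (auto intro!: sum.cong)
    also have "\<dots> = cnj (V $$ (0,i)) * V $$ (0,j) + (\<Sum>l<m. cnj (V $$ (Suc l,i)) * V $$ (Suc l,j))"
      unfolding n_def by (rule sum.lessThan_Suc_shift)
    also have "(\<Sum>l<m. cnj (V $$ (Suc l,i)) * V $$ (Suc l,j))
       = (\<Sum>l<m. cnj (if i = 0 then 0 else U3 $$ (l, i - 1)) * (if j = 0 then 0 else U3 $$ (l, j - 1)))"
      by (rule sum.cong) (use ij in \<open>auto simp: Vrow\<close>)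
    also have "cnj (V $$ (0,i)) * V $$ (0,j) + \<dots> = 1\<^sub>m n $$ (i,j)"
      using ij unfolding Vrow0[OF ij(1)] Vrow0[OF ij(2)]
      by (cases i; cases j) (auto simp: U3U3 n_def)
    finally show "(mat_adjoint V * V) $$ (i,j) = 1\<^sub>m n $$ (i,j)" .
  qed (use V in auto)
  define lam where "lam i = (if i = 0 then Re e else lam3 (i - 1))" for i
  define D where "D = mat_diag n (\<lambda>i. complex_of_real (lam i))"
  have D: "D \<in> carrier_mat n n" unfolding D_def by auto
  have BV: "B = V * D * mat_adjoint V"
  proof (rule eq_matI)
    fix i j assume "i < dim_row (V * D * mat_adjoint V)" "j < dim_col (V * D * mat_adjoint V)"
    then have ij: "i < n" "j < n" using V by auto
    have "(V * D * mat_adjoint V) $$ (i,j) = (\<Sum>l<n. V $$ (i,l) * complex_of_real (lam l) * cnj (V $$ (j,l)))"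
      unfolding D_def using V ij by (subst mult_diag_mult_index[of _ n n _ n]) (auto intro!: sum.cong)
    also have "\<dots> = V $$ (i,0) * complex_of_real (lam 0) * cnj (V $$ (j,0))
        + (\<Sum>l<m. V $$ (i,Suc l) * complex_of_real (lam (Suc l)) * cnj (V $$ (j,Suc l)))"
      unfolding n_def by (rule sum.lessThan_Suc_shift)
    also have "(\<Sum>l<m. V $$ (i,Suc l) * complex_of_real (lam (Suc l)) * cnj (V $$ (j,Suc l)))
       = (\<Sum>l<m. (if i = 0 then 0 else U3 $$ (i - 1, l)) * complex_of_real (lam3 l) * cnj (if j = 0 then 0 else U3 $$ (j - 1, l)))"
      by (rule sum.cong) (use ij in \<open>auto simp: Vcol lam_def\<close>)
    also have "V $$ (i,0) * complex_of_real (lam 0) * cnj (V $$ (j,0)) + \<dots> = B $$ (i,j)"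
      using ij B0 B0' e_real unfolding Vcol0[OF ij(1)] Vcol0[OF ij(2)]
      by (cases i; cases j) (auto simp: lam_def D3 n_def)
    finally show "B $$ (i,j) = (V * D * mat_adjoint V) $$ (i,j)" by simp
  qed (use V B D in auto)
  define U where "U = W * V"
  have U: "U \<in> carrier_mat n n" unfolding U_def using W V by auto
  have "mat_adjoint U * U = (mat_adjoint V * mat_adjoint W) * (W * V)"
    unfolding U_def using W V by (subst adj_mult[of _ n n _ n]) auto
  also have "\<dots> = mat_adjoint V * ((mat_adjoint W * W) * V)"
    using W V by (simp add: assoc_mult_mat[of _ n n _ n _ n])
  also have "\<dots> = 1\<^sub>m n" using WW VV V by simp
  finally have Uu: "unitary_mat n U" using U unfolding unitary_mat_def by auto
  have WBW: "W * B * mat_adjoint W = A"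
  proof -
    have "W * (mat_adjoint W * (A * W)) = (W * mat_adjoint W) * (A * W)"
      using assoc_mult_mat[of W n n "mat_adjoint W" n "A * W" n] W A by auto
    also have "\<dots> = A * W" using WWt A W by simp
    finally have "W * B * mat_adjoint W = A * W * mat_adjoint W" unfolding B_def by simp
    also have "\<dots> = A * (W * mat_adjoint W)"
      using assoc_mult_mat[of A n n W n "mat_adjoint W" n] A W by auto
    also have "\<dots> = A" using WWt A by simp
    finally show ?thesis .
  qed
  have Vd: "V * D * mat_adjoint V \<in> carrier_mat n n" using V D by auto
  have e1: "W * V * D = W * (V * D)"
    by (rule assoc_mult_mat[of W n n V n D n]) (use W V D in auto)
  have "U * D * mat_adjoint U = W * V * D * (mat_adjoint V * mat_adjoint W)"
    unfolding U_def using W V by (subst adj_mult[of _ n n _ n]) auto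
  also have "\<dots> = W * (V * D) * (mat_adjoint V * mat_adjoint W)" using e1 by simp
  also have "\<dots> = W * ((V * D) * (mat_adjoint V * mat_adjoint W))"
    by (rule assoc_mult_mat[of W n n "V * D" n "mat_adjoint V * mat_adjoint W" n]) (use W V D in auto)
  also have "(V * D) * (mat_adjoint V * mat_adjoint W) = (V * D * mat_adjoint V) * mat_adjoint W"
    by (rule assoc_mult_mat[of "V * D" n n "mat_adjoint V" n "mat_adjoint W" n, symmetric]) (use W V D in auto)
  also have "W * \<dots> = W * (V * D * mat_adjoint V) * mat_adjoint W"
    by (rule assoc_mult_mat[of W n n "V * D * mat_adjoint V" n "mat_adjoint W" n, symmetric]) (use W Vd in auto)
  also have "\<dots> = W * B * mat_adjoint W" using BV by simp
  also have "\<dots> = A" by (rule WBW)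
  finally have "A = U * D * mat_adjoint U" by simp
  then show ?case using Uu unfolding D_def n_def by blast
qed



lemma cs_real: fixes a b :: "nat \<Rightarrow> real"
  shows "(\<Sum>i\<in>I. a i * b i)^2 \<le> (\<Sum>i\<in>I. (a i)^2) * (\<Sum>i\<in>I. (b i)^2)"
proof (cases "(\<Sum>i\<in>I. (b i)^2) > 0")
  case False
  show ?thesis
  proof (cases "finite I")
    case True
    have "(\<Sum>i\<in>I. (b i)^2) = 0" using False sum_nonneg[of I "\<lambda>i. (b i)^2"] by force
    moreover have "(\<Sum>i\<in>I. (b i)^2) = 0 \<longleftrightarrow> (\<forall>i\<in>I. (b i)^2 = 0)"
      by (rule sum_nonneg_eq_0_iff[OF True]) simp
    ultimately have "\<forall>i\<in>I. (b i)^2 = 0" by blast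
    then have "(\<Sum>i\<in>I. a i * b i) = 0" by simp
    then show ?thesis by (simp add: sum_nonneg)
  next
    case False
    then show ?thesis by simp
  qed
next
  case True
  define B where "B = (\<Sum>i\<in>I. (b i)^2)"
  define S where "S = (\<Sum>i\<in>I. a i * b i)"
  define r where "r = S / B"
  have Bp: "0 < B" using True B_def by simp
  have "0 \<le> (\<Sum>i\<in>I. (a i - r * b i)^2)" by (simp add: sum_nonneg)
  also have "\<dots> = (\<Sum>i\<in>I. (a i)^2 - 2 * r * (a i * b i) + r^2 * (b i)^2)"
    by (intro sum.cong refl) (simp add: power2_eq_square algebra_simps)
  also have "\<dots> = (\<Sum>i\<in>I. (a i)^2) - (\<Sum>i\<in>I. 2 * r * (a i * b i)) + (\<Sum>i\<in>I. r^2 * (b i)^2)"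
    by (simp only: sum.distrib sum_subtractf)
  also have "\<dots> = (\<Sum>i\<in>I. (a i)^2) - 2 * r * S + r^2 * B"
    unfolding S_def B_def by (simp only: sum_distrib_left)
  also have "2 * r * S = 2 * (S^2 / B)" unfolding r_def by (simp add: power2_eq_square)
  also have "r^2 * B = S^2 / B" unfolding r_def using Bp by (simp add: power2_eq_square)
  finally have "S^2 / B \<le> (\<Sum>i\<in>I. (a i)^2)" by simp
  then have "S^2 \<le> (\<Sum>i\<in>I. (a i)^2) * B" using Bp by (simp add: divide_le_eq)
  then show ?thesis unfolding S_def B_def .
qed

lemma cs_complex: fixes a b :: "nat \<Rightarrow> complex"
  shows "(cmod (\<Sum>i\<in>I. a i * b i))^2 \<le> (\<Sum>i\<in>I. (cmod (a i))^2) * (\<Sum>i\<in>I. (cmod (b i))^2)"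
proof -
  have "cmod (\<Sum>i\<in>I. a i * b i) \<le> (\<Sum>i\<in>I. cmod (a i) * cmod (b i))"
    by (rule order_trans[OF norm_sum]) (simp add: norm_mult)
  then have "(cmod (\<Sum>i\<in>I. a i * b i))^2 \<le> (\<Sum>i\<in>I. cmod (a i) * cmod (b i))^2"
    by (rule power_mono) simp
  also have "\<dots> \<le> (\<Sum>i\<in>I. (cmod (a i))^2) * (\<Sum>i\<in>I. (cmod (b i))^2)" by (rule cs_real)
  finally show ?thesis .
qed

lemma jensen_sq: fixes lam x :: "nat \<Rightarrow> real"
  assumes "\<And>i. i \<in> I \<Longrightarrow> 0 \<le> lam i" "(\<Sum>i\<in>I. lam i) = 1"
  shows "(\<Sum>i\<in>I. lam i * x i)^2 \<le> (\<Sum>i\<in>I. lam i * (x i)^2)"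
proof -
  have "(\<Sum>i\<in>I. lam i * x i) = (\<Sum>i\<in>I. sqrt (lam i) * (sqrt (lam i) * x i))"
    using assms(1) by (intro sum.cong refl) (simp add: mult.assoc[symmetric])
  also have "\<dots>^2 \<le> (\<Sum>i\<in>I. (sqrt (lam i))^2) * (\<Sum>i\<in>I. (sqrt (lam i) * x i)^2)" by (rule cs_real)
  also have "(\<Sum>i\<in>I. (sqrt (lam i))^2) = 1" using assms by simp
  also have "(\<Sum>i\<in>I. (sqrt (lam i) * x i)^2) = (\<Sum>i\<in>I. lam i * (x i)^2)"
    using assms(1) by (intro sum.cong) (auto simp: power_mult_distrib)
  finally show ?thesis by simp
qed

lemma sl_sum_swap: "(\<Sum>x\<leftarrow>xs. \<Sum>i\<in>I. g x i) = (\<Sum>i\<in>I. \<Sum>x\<leftarrow>xs. g x i)"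
  by (induct xs) (simp_all add: sum.distrib)

lemma sl_swap: "(\<Sum>x\<leftarrow>xs. \<Sum>y\<leftarrow>ys. g x y) = (\<Sum>y\<leftarrow>ys. \<Sum>x\<leftarrow>xs. (g x y :: 'a :: comm_monoid_add))"
  by (induct xs) (simp_all add: sum_list_addf)

lemma sl_mono: "(\<And>x. x \<in> set xs \<Longrightarrow> f x \<le> g x) \<Longrightarrow> (\<Sum>x\<leftarrow>xs. f x) \<le> (\<Sum>x\<leftarrow>xs. (g x :: real))"
  by (induct xs) (auto intro: add_mono)

lemma sl_nonneg: "(\<And>x. x \<in> set xs \<Longrightarrow> 0 \<le> f x) \<Longrightarrow> 0 \<le> (\<Sum>x\<leftarrow>xs. (f x :: real))"
  by (induct xs) auto

lemma sl_mult_right: "(\<Sum>x\<leftarrow>xs. f x * c) = (\<Sum>x\<leftarrow>xs. f x) * (c :: 'a :: comm_semiring_1)"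
  by (induct xs) (simp_all add: distrib_right)

lemma sl_of_real: "complex_of_real (\<Sum>x\<leftarrow>xs. f x) = (\<Sum>x\<leftarrow>xs. complex_of_real (f x))"
  by (induct xs) auto

lemma sl_concat: "(\<Sum>T\<leftarrow>concat (map (\<lambda>D. map ((*) D) Cs) Ds). f T) = (\<Sum>D\<leftarrow>Ds. \<Sum>C\<leftarrow>Cs. f (D * C))"
  by (induct Ds) (simp_all add: o_def)

lemma foldr_carrier: assumes "\<forall>K\<in>set Ks. K \<in> carrier_mat dout din"
  shows "foldr (\<lambda>K S. mat_adjoint K * K + S) Ks (0\<^sub>m din din) \<in> carrier_mat din din"
  using assms by (induct Ks) auto

lemma foldr_index: assumes "\<forall>K\<in>set Ks. K \<in> carrier_mat dout din" "j < din" "j' < din"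
  shows "foldr (\<lambda>K S. mat_adjoint K * K + S) Ks (0\<^sub>m din din) $$ (j,j')
     = (\<Sum>K\<leftarrow>Ks. \<Sum>r<dout. cnj (K $$ (r,j)) * K $$ (r,j'))"
  using assms
proof (induct Ks)
  case Nil
  then show ?case by simp
next
  case (Cons K Ks)
  let ?S = "foldr (\<lambda>K S. mat_adjoint K * K + S) Ks (0\<^sub>m din din)"
  have K: "K \<in> carrier_mat dout din" and Ks: "\<forall>K\<in>set Ks. K \<in> carrier_mat dout din" using Cons by auto
  have S: "?S \<in> carrier_mat din din" by (rule foldr_carrier[OF Ks])
  have "foldr (\<lambda>K S. mat_adjoint K * K + S) (K # Ks) (0\<^sub>m din din) $$ (j,j')
      = (mat_adjoint K * K) $$ (j,j') + ?S $$ (j,j')"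
    using S Cons.prems by simp
  also have "(mat_adjoint K * K) $$ (j,j') = (\<Sum>r<dout. cnj (K $$ (r,j)) * K $$ (r,j'))"
    using K Cons.prems by (subst mult_index[of _ din dout _ din]) (auto intro!: sum.cong)
  also have "?S $$ (j,j') = (\<Sum>K\<leftarrow>Ks. \<Sum>r<dout. cnj (K $$ (r,j)) * K $$ (r,j'))"
    using Cons Ks by auto
  finally show ?case by simp
qed

lemma cptp_entries: assumes "cptp_kraus din dout Ks" "j < din" "j' < din"
  shows "(\<Sum>K\<leftarrow>Ks. \<Sum>r<dout. cnj (K $$ (r,j)) * K $$ (r,j')) = (if j = j' then 1 else 0)"
proof -
  have "(\<Sum>K\<leftarrow>Ks. \<Sum>r<dout. cnj (K $$ (r,j)) * K $$ (r,j'))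
     = foldr (\<lambda>K S. mat_adjoint K * K + S) Ks (0\<^sub>m din din) $$ (j,j')"
    using assms unfolding cptp_kraus_def by (intro foldr_index[symmetric]) auto
  also have "\<dots> = 1\<^sub>m din $$ (j,j')" using assms unfolding cptp_kraus_def by simp
  finally show ?thesis using assms by simp
qed

lemma cptp_col: assumes "cptp_kraus din dout Ks" "j < din"
  shows "(\<Sum>K\<leftarrow>Ks. \<Sum>r<dout. (cmod (K $$ (r,j)))^2) = 1"
proof -
  have "complex_of_real (\<Sum>K\<leftarrow>Ks. \<Sum>r<dout. (cmod (K $$ (r,j)))^2)
     = (\<Sum>K\<leftarrow>Ks. \<Sum>r<dout. cnj (K $$ (r,j)) * K $$ (r,j))"
    by (simp only: sl_of_real of_real_sum complex_norm_square mult.commute)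
  also have "\<dots> = 1" using cptp_entries[OF assms assms(2)] by simp
  finally show ?thesis by (simp only: of_real_eq_1_iff)
qed

lemma cptp_isometry: assumes "cptp_kraus din dout Ks"
  shows "(\<Sum>K\<leftarrow>Ks. \<Sum>r<dout. (cmod (\<Sum>j<din. K $$ (r,j) * w j))^2) = (\<Sum>j<din. (cmod (w j))^2)"
proof -
  have "complex_of_real (\<Sum>K\<leftarrow>Ks. \<Sum>r<dout. (cmod (\<Sum>j<din. K $$ (r,j) * w j))^2)
     = (\<Sum>K\<leftarrow>Ks. \<Sum>r<dout. (\<Sum>j<din. K $$ (r,j) * w j) * cnj (\<Sum>j'<din. K $$ (r,j') * w j'))"
    by (simp only: sl_of_real of_real_sum complex_norm_square)
  also have "\<dots> = (\<Sum>K\<leftarrow>Ks. \<Sum>r<dout. \<Sum>j<din. \<Sum>j'<din. (w j * cnj (w j')) * (cnj (K $$ (r,j')) * K $$ (r,j)))"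
    by (simp add: sum_product mult_ac)
  also have "\<dots> = (\<Sum>K\<leftarrow>Ks. \<Sum>j<din. \<Sum>j'<din. \<Sum>r<dout. (w j * cnj (w j')) * (cnj (K $$ (r,j')) * K $$ (r,j)))"
    by (simp add: sum.swap[of _ "{..<dout}"])
  also have "\<dots> = (\<Sum>j<din. \<Sum>j'<din. \<Sum>K\<leftarrow>Ks. \<Sum>r<dout. (w j * cnj (w j')) * (cnj (K $$ (r,j')) * K $$ (r,j)))"
    by (simp add: sl_sum_swap)
  also have "\<dots> = (\<Sum>j<din. \<Sum>j'<din. (w j * cnj (w j')) * (\<Sum>K\<leftarrow>Ks. \<Sum>r<dout. cnj (K $$ (r,j')) * K $$ (r,j)))"
    by (simp only: sum_distrib_left[symmetric] sum_list_const_mult)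
  also have "\<dots> = (\<Sum>j<din. \<Sum>j'<din. (w j * cnj (w j')) * (if j' = j then 1 else 0))"
    using cptp_entries[OF assms] by (intro sum.cong refl) auto
  also have "\<dots> = (\<Sum>j<din. w j * cnj (w j))"
    by (simp add: if_distrib cong: if_cong)
  also have "\<dots> = complex_of_real (\<Sum>j<din. (cmod (w j))^2)"
    by (simp only: of_real_sum complex_norm_square)
  finally show ?thesis by (simp only: of_real_eq_iff)
qed



lemma core:
  fixes lam :: "nat \<Rightarrow> real" and c :: real
  assumes Cs: "cptp_kraus d M Cs" and Ds: "cptp_kraus M d Ds"
    and lam0: "\<And>i. i < d \<Longrightarrow> 0 \<le> lam i" and lam1: "(\<Sum>i<d. lam i) = 1" and c0: "0 \<le> c"
  shows "(\<Sum>D\<leftarrow>Ds. \<Sum>C\<leftarrow>Cs. (cmod (\<Sum>l<d. complex_of_real (lam l) * (\<Sum>m<M. D $$ (l,m) * C $$ (m,l))))^2)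
        \<le> (\<Sum>l<d. max (lam l - c) 0) + c * real M"
proof -
  define a where "a (D::complex mat) (C::complex mat) l = (\<Sum>m<M. D $$ (l,m) * C $$ (m,l))" for D C l
  define f where "f l = (\<Sum>D\<leftarrow>Ds. \<Sum>C\<leftarrow>Cs. (cmod (a D C l))^2)" for l
  define g where "g l = (\<Sum>D\<leftarrow>Ds. \<Sum>m<M. (cmod ((D::complex mat) $$ (l,m)))^2)" for l
  have step1: "(cmod (\<Sum>l<d. complex_of_real (lam l) * a D C l))^2 \<le> (\<Sum>l<d. lam l * (cmod (a D C l))^2)" for D C
  proof -
    have "cmod (\<Sum>l<d. complex_of_real (lam l) * a D C l) \<le> (\<Sum>l<d. cmod (complex_of_real (lam l) * a D C l))"
      by (rule norm_sum)
    also have "\<dots> = (\<Sum>l<d. lam l * cmod (a D C l))"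
      using lam0 by (intro sum.cong refl) (simp add: norm_mult)
    finally have "(cmod (\<Sum>l<d. complex_of_real (lam l) * a D C l))^2 \<le> (\<Sum>l<d. lam l * cmod (a D C l))^2"
      by (rule power_mono) simp
    also have "\<dots> \<le> (\<Sum>l<d. lam l * (cmod (a D C l))^2)"
      by (rule jensen_sq) (use lam0 lam1 in auto)
    finally show ?thesis .
  qed
  have "(\<Sum>D\<leftarrow>Ds. \<Sum>C\<leftarrow>Cs. (cmod (\<Sum>l<d. complex_of_real (lam l) * (\<Sum>m<M. D $$ (l,m) * C $$ (m,l))))^2)
      = (\<Sum>D\<leftarrow>Ds. \<Sum>C\<leftarrow>Cs. (cmod (\<Sum>l<d. complex_of_real (lam l) * a D C l))^2)"
    by (simp add: a_def)
  also have "\<dots> \<le> (\<Sum>D\<leftarrow>Ds. \<Sum>C\<leftarrow>Cs. \<Sum>l<d. lam l * (cmod (a D C l))^2)"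
    by (intro sl_mono step1)
  also have "\<dots> = (\<Sum>l<d. lam l * f l)"
    unfolding f_def by (simp only: sl_sum_swap sum_list_const_mult)
  also have "\<dots> \<le> (\<Sum>l<d. max (lam l - c) 0 + c * g l)"
  proof (rule sum_mono)
    fix l assume "l \<in> {..<d}"
    then have l: "l < d" by simp
    have f0: "0 \<le> f l" unfolding f_def by (intro sl_nonneg) simp
    have f1: "f l \<le> 1"
    proof -
      have "f l \<le> (\<Sum>D\<leftarrow>Ds. \<Sum>C\<leftarrow>Cs. \<Sum>r<d. (cmod (\<Sum>m<M. D $$ (r,m) * C $$ (m,l)))^2)"
        unfolding f_def a_def
        by (intro sl_mono member_le_sum) (use l in auto)
      also have "\<dots> = (\<Sum>C\<leftarrow>Cs. \<Sum>D\<leftarrow>Ds. \<Sum>r<d. (cmod (\<Sum>m<M. D $$ (r,m) * C $$ (m,l)))^2)"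
        by (rule sl_swap)
      also have "\<dots> = (\<Sum>C\<leftarrow>Cs. \<Sum>m<M. (cmod (C $$ (m,l)))^2)"
        using cptp_isometry[OF Ds] by simp
      also have "\<dots> = 1" using cptp_col[OF Cs l] .
      finally show ?thesis .
    qed
    have fg: "f l \<le> g l"
    proof -
      have "f l \<le> (\<Sum>D\<leftarrow>Ds. \<Sum>C\<leftarrow>Cs. (\<Sum>m<M. (cmod (D $$ (l,m)))^2) * (\<Sum>m<M. (cmod (C $$ (m,l)))^2))"
        unfolding f_def a_def by (intro sl_mono cs_complex)
      also have "\<dots> = (\<Sum>D\<leftarrow>Ds. (\<Sum>m<M. (cmod (D $$ (l,m)))^2) * (\<Sum>C\<leftarrow>Cs. \<Sum>m<M. (cmod (C $$ (m,l)))^2))"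
        by (simp only: sum_list_const_mult)
      also have "\<dots> = g l" unfolding g_def using cptp_col[OF Cs l] by simp
      finally show ?thesis .
    qed
    have "lam l * f l = (lam l - c) * f l + c * f l" by (simp add: algebra_simps)
    also have "(lam l - c) * f l \<le> max (lam l - c) 0"
    proof (cases "lam l - c \<ge> 0")
      case True
      then have "(lam l - c) * f l \<le> (lam l - c) * 1" by (intro mult_left_mono f1)
      then show ?thesis by simp
    next
      case False
      then have "(lam l - c) * f l \<le> 0" using f0 by (intro mult_nonpos_nonneg) auto
      then show ?thesis by simp
    qed
    also have "c * f l \<le> c * g l" using fg c0 by (intro mult_left_mono)
    finally show "lam l * f l \<le> max (lam l - c) 0 + c * g l" by simp
  qed
  also have "\<dots> = (\<Sum>l<d. max (lam l - c) 0) + c * (\<Sum>l<d. g l)"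
    by (simp add: sum.distrib sum_distrib_left)
  also have "(\<Sum>l<d. g l) = real M"
  proof -
    have "(\<Sum>l<d. g l) = (\<Sum>D\<leftarrow>Ds. \<Sum>l<d. \<Sum>m<M. (cmod (D $$ (l,m)))^2)"
      unfolding g_def by (simp only: sl_sum_swap)
    also have "\<dots> = (\<Sum>D\<leftarrow>Ds. \<Sum>m<M. \<Sum>l<d. (cmod (D $$ (l,m)))^2)"
      by (simp only: sum.swap[of _ "{..<d}"])
    also have "\<dots> = (\<Sum>m<M. \<Sum>D\<leftarrow>Ds. \<Sum>l<d. (cmod (D $$ (l,m)))^2)"
      by (simp only: sl_sum_swap)
    also have "\<dots> = (\<Sum>m<M. 1)" using cptp_col[OF Ds] by simp
    finally show ?thesis by simp
  qed
  finally show ?thesis .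
qed



abbreviation kfold :: "nat \<Rightarrow> complex mat list \<Rightarrow> complex mat" where
  "kfold din Ks \<equiv> foldr (\<lambda>K S. mat_adjoint K * K + S) Ks (0\<^sub>m din din)"

lemma kfold_right: assumes U: "U \<in> carrier_mat din din" and Ks: "\<forall>K\<in>set Ks. K \<in> carrier_mat dout din"
  shows "kfold din (map (\<lambda>K. K * U) Ks) = mat_adjoint U * kfold din Ks * U"
  using Ks
proof (induct Ks)
  case Nil
  have "mat_adjoint U * 0\<^sub>m din din = 0\<^sub>m din din" using U by (intro right_mult_zero_mat) auto
  moreover have "0\<^sub>m din din * U = 0\<^sub>m din din" using U by (intro left_mult_zero_mat)
  ultimately show ?case by simp
next
  case (Cons K Ks)
  have K: "K \<in> carrier_mat dout din" and Ks': "\<forall>K\<in>set Ks. K \<in> carrier_mat dout din" using Cons.prems by auto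
  let ?S = "kfold din Ks"
  have S: "?S \<in> carrier_mat din din" by (rule foldr_carrier[OF Ks'])
  have Ua: "mat_adjoint U \<in> carrier_mat din din" using U by simp
  have Ka: "mat_adjoint K \<in> carrier_mat din dout" using K by simp
  have "mat_adjoint (K * U) * (K * U) = (mat_adjoint U * mat_adjoint K) * (K * U)"
    using K U by (subst adj_mult[of _ dout din _ din]) auto
  also have "\<dots> = mat_adjoint U * (mat_adjoint K * (K * U))"
    by (rule assoc_mult_mat[of _ din din _ dout _ din]) (use Ua Ka K U in auto)
  also have "mat_adjoint K * (K * U) = (mat_adjoint K * K) * U"
    by (rule assoc_mult_mat[of _ din dout _ din _ din, symmetric]) (use Ka K U in auto)
  also have "mat_adjoint U * \<dots> = mat_adjoint U * (mat_adjoint K * K) * U"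
    by (rule assoc_mult_mat[of _ din din _ din _ din, symmetric]) (use Ua Ka K U in auto)
  finally have e1: "mat_adjoint (K * U) * (K * U) = mat_adjoint U * (mat_adjoint K * K) * U" .
  have "mat_adjoint U * (mat_adjoint K * K + ?S) * U
      = (mat_adjoint U * (mat_adjoint K * K) + mat_adjoint U * ?S) * U"
    using Ua Ka K S by (subst mult_add_distrib_mat[of _ din din]) auto
  also have "\<dots> = mat_adjoint U * (mat_adjoint K * K) * U + mat_adjoint U * ?S * U"
    using Ua Ka K S U by (subst add_mult_distrib_mat[of _ din din]) auto
  finally have e2: "mat_adjoint U * (mat_adjoint K * K + ?S) * U
      = mat_adjoint U * (mat_adjoint K * K) * U + mat_adjoint U * ?S * U" .
  show ?case using Cons(1)[OF Ks'] e1 e2 by simp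
qed

lemma cptp_right: assumes "cptp_kraus din dout Ks" "U \<in> carrier_mat din din" "mat_adjoint U * U = 1\<^sub>m din"
  shows "cptp_kraus din dout (map (\<lambda>K. K * U) Ks)"
proof -
  have Ks: "\<forall>K\<in>set Ks. K \<in> carrier_mat dout din" and F: "kfold din Ks = 1\<^sub>m din"
    using assms(1) unfolding cptp_kraus_def by auto
  have "kfold din (map (\<lambda>K. K * U) Ks) = mat_adjoint U * 1\<^sub>m din * U"
    using kfold_right[OF assms(2) Ks] F by simp
  also have "\<dots> = 1\<^sub>m din" using assms(2,3) by simp
  finally show ?thesis using Ks assms(2) unfolding cptp_kraus_def by auto
qed

lemma kfold_left: assumes V: "V \<in> carrier_mat n dout" and VV: "mat_adjoint V * V = 1\<^sub>m dout"
  and Ks: "\<forall>K\<in>set Ks. K \<in> carrier_mat dout din"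
  shows "kfold din (map (\<lambda>K. V * K) Ks) = kfold din Ks"
  using Ks
proof (induct Ks)
  case Nil
  show ?case by simp
next
  case (Cons K Ks)
  have K: "K \<in> carrier_mat dout din" and Ks': "\<forall>K\<in>set Ks. K \<in> carrier_mat dout din" using Cons.prems by auto
  have Va: "mat_adjoint V \<in> carrier_mat dout n" using V by simp
  have Ka: "mat_adjoint K \<in> carrier_mat din dout" using K by simp
  have "mat_adjoint (V * K) * (V * K) = (mat_adjoint K * mat_adjoint V) * (V * K)"
    using K V by (subst adj_mult[of _ n dout _ din]) auto
  also have "\<dots> = mat_adjoint K * (mat_adjoint V * (V * K))"
    by (rule assoc_mult_mat[of _ din dout _ n _ din]) (use Va Ka K V in auto)
  also have "mat_adjoint V * (V * K) = (mat_adjoint V * V) * K"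
    by (rule assoc_mult_mat[of _ dout n _ dout _ din, symmetric]) (use Va K V in auto)
  also have "\<dots> = K" using VV K by simp
  finally have e1: "mat_adjoint (V * K) * (V * K) = mat_adjoint K * K" .
  show ?case using Cons(1)[OF Ks'] e1 by simp
qed

lemma cptp_left: assumes "cptp_kraus din dout Ks" "V \<in> carrier_mat n dout" "mat_adjoint V * V = 1\<^sub>m dout"
  shows "cptp_kraus din n (map (\<lambda>K. V * K) Ks)"
proof -
  have Ks: "\<forall>K\<in>set Ks. K \<in> carrier_mat dout din" and F: "kfold din Ks = 1\<^sub>m din"
    using assms(1) unfolding cptp_kraus_def by auto
  show ?thesis using kfold_left[OF assms(2,3) Ks] F Ks assms(2) unfolding cptp_kraus_def by auto
qed

lemma mtrace_udu: assumes U: "U \<in> carrier_mat d d" and UU: "mat_adjoint U * U = 1\<^sub>m d"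
  shows "mtrace (U * mat_diag d f * mat_adjoint U) = (\<Sum>l<d. f l)"
proof -
  have "mtrace (U * mat_diag d f * mat_adjoint U) = (\<Sum>i<d. (U * mat_diag d f * mat_adjoint U) $$ (i,i))"
    unfolding mtrace_def using U by simp
  also have "\<dots> = (\<Sum>i<d. \<Sum>l<d. U $$ (i,l) * f l * cnj (U $$ (i,l)))"
    using U by (intro sum.cong refl) (subst mult_diag_mult_index[of _ d d _ d], auto intro!: sum.cong)
  also have "\<dots> = (\<Sum>l<d. f l * (\<Sum>i<d. cnj (U $$ (i,l)) * U $$ (i,l)))"
    by (subst sum.swap) (simp add: sum_distrib_left mult_ac)
  also have "\<dots> = (\<Sum>l<d. f l)"
  proof (intro sum.cong refl)
    fix l assume l: "l \<in> {..<d}"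
    have "(\<Sum>i<d. cnj (U $$ (i,l)) * U $$ (i,l)) = (mat_adjoint U * U) $$ (l,l)"
      using U l by (subst mult_index[of _ d d _ d]) auto
    then show "f l * (\<Sum>i<d. cnj (U $$ (i,l)) * U $$ (i,l)) = f l" using UU l by simp
  qed
  finally show ?thesis .
qed

lemma udu_mult: assumes U: "U \<in> carrier_mat d d" and UU: "mat_adjoint U * U = 1\<^sub>m d"
  shows "(U * mat_diag d f * mat_adjoint U) * (U * mat_diag d g * mat_adjoint U)
     = U * mat_diag d (\<lambda>i. f i * g i) * mat_adjoint U"
proof -
  let ?F = "mat_diag d f" and ?G = "mat_diag d g" and ?Ua = "mat_adjoint U"
  have F: "?F \<in> carrier_mat d d" and G: "?G \<in> carrier_mat d d" and Ua: "?Ua \<in> carrier_mat d d" using U by auto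
  have GUa: "?G * ?Ua \<in> carrier_mat d d" using G Ua by (rule mult_carrier_mat)
  have e1: "(U * ?F * ?Ua) * (U * ?G * ?Ua) = (U * ?F) * (?Ua * (U * ?G * ?Ua))"
    by (rule assoc_mult_mat[of _ d d _ d _ d]) (use U F G Ua GUa in auto)
  have a1: "U * ?G * ?Ua = U * (?G * ?Ua)"
    by (rule assoc_mult_mat[of _ d d _ d _ d]) (use U G Ua in auto)
  have "?Ua * (U * ?G * ?Ua) = ?Ua * (U * (?G * ?Ua))"
    by (simp only: a1)
  also have "?Ua * (U * (?G * ?Ua)) = (?Ua * U) * (?G * ?Ua)"
    by (rule assoc_mult_mat[of _ d d _ d _ d, symmetric]) (use U F G Ua GUa in auto)
  also have "\<dots> = ?G * ?Ua" using UU left_mult_one_mat[OF GUa] by simp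
  finally have e2: "?Ua * (U * ?G * ?Ua) = ?G * ?Ua" .
  have "(U * ?F) * (?G * ?Ua) = U * (?F * (?G * ?Ua))"
    by (rule assoc_mult_mat[of _ d d _ d _ d]) (use U F G Ua GUa in auto)
  also have "?F * (?G * ?Ua) = (?F * ?G) * ?Ua"
    by (rule assoc_mult_mat[of _ d d _ d _ d, symmetric]) (use U F G Ua GUa in auto)
  also have "U * \<dots> = U * (?F * ?G) * ?Ua"
    by (rule assoc_mult_mat[of _ d d _ d _ d, symmetric]) (use U F G Ua GUa in auto)
  finally have e3: "(U * ?F) * (?G * ?Ua) = U * (?F * ?G) * ?Ua" .
  show ?thesis by (simp only: e1 e2 e3 mat_diag_diag)
qed

lemma mtrace_conj: assumes U: "U \<in> carrier_mat d d" and T: "T \<in> carrier_mat d d"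
  shows "mtrace (T * (U * mat_diag d g * mat_adjoint U))
     = (\<Sum>l<d. g l * (\<Sum>k<d. \<Sum>i<d. cnj (U $$ (i,l)) * T $$ (i,k) * U $$ (k,l)))"
proof -
  let ?R = "U * mat_diag d g * mat_adjoint U"
  have R: "?R \<in> carrier_mat d d" using U by auto
  have Rij: "?R $$ (k,i) = (\<Sum>l<d. U $$ (k,l) * g l * cnj (U $$ (i,l)))" if "k < d" "i < d" for k i
    using U that by (subst mult_diag_mult_index[of _ d d _ d]) (auto intro!: sum.cong)
  have "mtrace (T * ?R) = (\<Sum>i<d. (T * ?R) $$ (i,i))" unfolding mtrace_def using T by simp
  also have "\<dots> = (\<Sum>i<d. \<Sum>k<d. T $$ (i,k) * ?R $$ (k,i))"
    using T R by (intro sum.cong refl) (rule mult_index[of _ d d _ d], auto)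
  also have "\<dots> = (\<Sum>i<d. \<Sum>k<d. \<Sum>l<d. T $$ (i,k) * (U $$ (k,l) * g l * cnj (U $$ (i,l))))"
    by (intro sum.cong refl) (simp add: Rij sum_distrib_left)
  also have "\<dots> = (\<Sum>i<d. \<Sum>l<d. \<Sum>k<d. T $$ (i,k) * (U $$ (k,l) * g l * cnj (U $$ (i,l))))"
    by (rule sum.cong[OF refl], rule sum.swap)
  also have "\<dots> = (\<Sum>l<d. \<Sum>i<d. \<Sum>k<d. T $$ (i,k) * (U $$ (k,l) * g l * cnj (U $$ (i,l))))"
    by (rule sum.swap)
  also have "\<dots> = (\<Sum>l<d. \<Sum>k<d. \<Sum>i<d. T $$ (i,k) * (U $$ (k,l) * g l * cnj (U $$ (i,l))))"
    by (rule sum.cong[OF refl], rule sum.swap)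
  also have "\<dots> = (\<Sum>l<d. g l * (\<Sum>k<d. \<Sum>i<d. cnj (U $$ (i,l)) * T $$ (i,k) * U $$ (k,l)))"
    by (simp add: sum_distrib_left mult_ac)
  finally show ?thesis .
qed

lemma conj_index: assumes U: "U \<in> carrier_mat d d" and D: "D \<in> carrier_mat d M" and C: "C \<in> carrier_mat M d"
  and l: "l < d"
  shows "(\<Sum>k<d. \<Sum>i<d. cnj (U $$ (i,l)) * (D * C) $$ (i,k) * U $$ (k,l))
     = (\<Sum>m<M. (mat_adjoint U * D) $$ (l,m) * (C * U) $$ (m,l))"
proof -
  have "(\<Sum>m<M. (mat_adjoint U * D) $$ (l,m) * (C * U) $$ (m,l))
      = (\<Sum>m<M. (\<Sum>i<d. cnj (U $$ (i,l)) * D $$ (i,m)) * (\<Sum>k<d. C $$ (m,k) * U $$ (k,l)))"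
    using U D C l by (intro sum.cong refl) (simp add: mult_index[of _ M d _ d] mult_index[of _ d d _ M] del: index_mult_mat)
  also have "\<dots> = (\<Sum>m<M. \<Sum>i<d. \<Sum>k<d. cnj (U $$ (i,l)) * D $$ (i,m) * (C $$ (m,k) * U $$ (k,l)))"
    by (simp add: sum_product)
  also have "\<dots> = (\<Sum>i<d. \<Sum>m<M. \<Sum>k<d. cnj (U $$ (i,l)) * D $$ (i,m) * (C $$ (m,k) * U $$ (k,l)))"
    by (rule sum.swap)
  also have "\<dots> = (\<Sum>i<d. \<Sum>k<d. \<Sum>m<M. cnj (U $$ (i,l)) * D $$ (i,m) * (C $$ (m,k) * U $$ (k,l)))"
    by (rule sum.cong[OF refl], rule sum.swap)
  also have "\<dots> = (\<Sum>k<d. \<Sum>i<d. \<Sum>m<M. cnj (U $$ (i,l)) * D $$ (i,m) * (C $$ (m,k) * U $$ (k,l)))"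
    by (rule sum.swap)
  also have "\<dots> = (\<Sum>k<d. \<Sum>i<d. cnj (U $$ (i,l)) * (D * C) $$ (i,k) * U $$ (k,l))"
  proof (intro sum.cong refl)
    fix k i assume "k \<in> {..<d}" "i \<in> {..<d}"
    then have "(D * C) $$ (i,k) = (\<Sum>m<M. D $$ (i,m) * C $$ (m,k))"
      using D C by (intro mult_index) auto
    then show "(\<Sum>m<M. cnj (U $$ (i,l)) * D $$ (i,m) * (C $$ (m,k) * U $$ (k,l)))
        = cnj (U $$ (i,l)) * (D * C) $$ (i,k) * U $$ (k,l)"
      by (simp add: sum_distrib_left sum_distrib_right mult_ac)
  qed
  finally show ?thesis by simp
qed



lemma sl_cong: "(\<And>x. x \<in> set xs \<Longrightarrow> f x = g x) \<Longrightarrow> (\<Sum>x\<leftarrow>xs. f x) = (\<Sum>x\<leftarrow>xs. (g x :: 'a :: monoid_add))"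
  by (induct xs) auto

lemma udu_index: assumes U: "U \<in> carrier_mat d d" and "i < d" "j < d"
  shows "(U * mat_diag d f * mat_adjoint U) $$ (i,j) = (\<Sum>l<d. U $$ (i,l) * f l * cnj (U $$ (j,l)))"
  using assms by (subst mult_diag_mult_index[of _ d d _ d]) (auto intro!: sum.cong)

theorem mainTheorem2:
  fixes n d M :: nat and \<rho> :: "complex mat" and Cs Ds :: "complex mat list" and \<gamma> :: real
  assumes rho: "density_op d \<rho>"
    and sub: "M \<le> d"
    and enc: "cptp_kraus d M Cs"
    and dec: "cptp_kraus M d Ds"
  shows "ent_fidelity \<rho> (kraus_compose Ds Cs)
    \<le> Re (mtrace (spec_proj_ge \<rho> (exp (- real n * \<gamma>) \<cdot>\<^sub>m 1\<^sub>m d)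
                  * (\<rho> - exp (- real n * \<gamma>) \<cdot>\<^sub>m 1\<^sub>m d)))
      + exp (- real n * \<gamma>) * real M"
proof -
  define c where "c = exp (- real n * \<gamma>)"
  have c0: "0 \<le> c" unfolding c_def by simp
  have rhoC: "\<rho> \<in> carrier_mat d d" and rhoH: "mat_adjoint \<rho> = \<rho>"
    and psd: "\<And>v. v \<in> carrier_vec d \<Longrightarrow> 0 \<le> Re ((\<rho> *\<^sub>v v) \<bullet>c v)" and tr1: "mtrace \<rho> = 1"
    using rho unfolding density_op_def psd_mat_def hermitian_mat_def by auto
  define X where "X = \<rho> - complex_of_real c \<cdot>\<^sub>m 1\<^sub>m d"
  have XC: "X \<in> carrier_mat d d" unfolding X_def by (intro minus_carrier_mat) auto
  have dX: "dim_row X = d" using XC by auto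
  have rho_ij: "\<rho> $$ (i,j) = cnj (\<rho> $$ (j,i))" if "i < d" "j < d" for i j
  proof -
    have "\<rho> $$ (i,j) = mat_adjoint \<rho> $$ (i,j)" using rhoH by simp
    also have "\<dots> = cnj (\<rho> $$ (j,i))" using rhoC that by (intro adj_index) auto
    finally show ?thesis .
  qed
  have X_ij: "X $$ (i,j) = \<rho> $$ (i,j) - (if i = j then complex_of_real c else 0)" if "i < d" "j < d" for i j
    unfolding X_def using that by simp
  have XH: "mat_adjoint X = X"
  proof (rule eq_matI)
    fix i j assume "i < dim_row X" "j < dim_col X"
    then have ij: "i < d" "j < d" using XC by auto
    have "mat_adjoint X $$ (i,j) = cnj (X $$ (j,i))" using XC ij by (intro adj_index) auto
    also have "\<dots> = X $$ (i,j)" using ij by (simp add: X_ij rho_ij[of j i])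
    finally show "mat_adjoint X $$ (i,j) = X $$ (i,j)" .
  qed (use XC in auto)
  from spectral[OF XC XH] obtain U0 lam0 where U0: "unitary_mat d U0"
    and X0: "X = U0 * mat_diag d (\<lambda>i. complex_of_real (lam0 i)) * mat_adjoint U0" by blast
  have "\<exists>P U lam. unitary_mat (dim_row X) U \<and>
      X = U * mat_diag (dim_row X) (\<lambda>i. complex_of_real (lam i)) * mat_adjoint U \<and>
      P = U * mat_diag (dim_row X) (\<lambda>i. if lam i \<ge> 0 then 1 else 0) * mat_adjoint U"
    unfolding dX
    by (rule exI[of _ "U0 * mat_diag d (\<lambda>i. if lam0 i \<ge> 0 then 1 else 0) * mat_adjoint U0"],
        rule exI[of _ U0], rule exI[of _ lam0]) (use U0 X0 in simp)
  then have "\<exists>U lam. unitary_mat (dim_row X) U \<and>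
      X = U * mat_diag (dim_row X) (\<lambda>i. complex_of_real (lam i)) * mat_adjoint U \<and>
      spec_proj_nonneg X = U * mat_diag (dim_row X) (\<lambda>i. if lam i \<ge> 0 then 1 else 0) * mat_adjoint U"
    unfolding spec_proj_nonneg_def by (rule someI_ex)
  then obtain U lam where U: "unitary_mat d U"
    and Xeq: "X = U * mat_diag d (\<lambda>i. complex_of_real (lam i)) * mat_adjoint U"
    and Peq: "spec_proj_nonneg X = U * mat_diag d (\<lambda>i. if lam i \<ge> 0 then 1 else 0) * mat_adjoint U"
    using dX by auto
  have Uc: "U \<in> carrier_mat d d" and UU: "mat_adjoint U * U = 1\<^sub>m d" using U unfolding unitary_mat_def by auto
  have Ua: "mat_adjoint U \<in> carrier_mat d d" using Uc by simp
  have UUt: "U * mat_adjoint U = 1\<^sub>m d" using mat_mult_left_right_inverse[OF Ua Uc UU] .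
  define Lam where "Lam i = lam i + c" for i
  define Dg where "Dg = mat_diag d (\<lambda>i. complex_of_real (Lam i))"
  have Dg: "Dg \<in> carrier_mat d d" unfolding Dg_def by simp
  have rho_eq: "\<rho> = U * Dg * mat_adjoint U"
  proof (rule eq_matI)
    fix i j assume "i < dim_row (U * Dg * mat_adjoint U)" "j < dim_col (U * Dg * mat_adjoint U)"
    then have ij: "i < d" "j < d" using Uc by auto
    have "(U * Dg * mat_adjoint U) $$ (i,j) = (\<Sum>l<d. U $$ (i,l) * complex_of_real (Lam l) * cnj (U $$ (j,l)))"
      unfolding Dg_def by (rule udu_index[OF Uc ij])
    also have "\<dots> = (\<Sum>l<d. U $$ (i,l) * complex_of_real (lam l) * cnj (U $$ (j,l)))
        + complex_of_real c * (\<Sum>l<d. U $$ (i,l) * cnj (U $$ (j,l)))"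
      by (simp add: Lam_def sum.distrib sum_distrib_left algebra_simps)
    also have "(\<Sum>l<d. U $$ (i,l) * complex_of_real (lam l) * cnj (U $$ (j,l))) = X $$ (i,j)"
      unfolding Xeq by (rule udu_index[OF Uc ij, symmetric])
    also have "(\<Sum>l<d. U $$ (i,l) * cnj (U $$ (j,l))) = (U * mat_adjoint U) $$ (i,j)"
      using Uc ij by (subst mult_index[of _ d d _ d]) (auto intro!: sum.cong)
    also have "\<dots> = (if i = j then 1 else 0)" using UUt ij by simp
    finally show "\<rho> $$ (i,j) = (U * Dg * mat_adjoint U) $$ (i,j)" using ij by (simp add: X_ij)
  qed (use rhoC Uc in auto)
  have UrU: "mat_adjoint U * (\<rho> * U) = Dg"
  proof -
    have "\<rho> * U = (U * Dg) * (mat_adjoint U * U)"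
      unfolding rho_eq by (rule assoc_mult_mat[of _ d d _ d _ d]) (use Uc Ua Dg in auto)
    also have "\<dots> = U * Dg" using UU Uc Dg by simp
    finally have "mat_adjoint U * (\<rho> * U) = mat_adjoint U * (U * Dg)" by simp
    also have "\<dots> = (mat_adjoint U * U) * Dg"
      by (rule assoc_mult_mat[of _ d d _ d _ d, symmetric]) (use Uc Ua Dg in auto)
    also have "\<dots> = Dg" using UU Dg by simp
    finally show ?thesis .
  qed
  have Lam0: "0 \<le> Lam i" if i: "i < d" for i
  proof -
    let ?u = "col U i"
    have u: "?u \<in> carrier_vec d" using Uc i by simp
    have "(\<rho> *\<^sub>v ?u) \<bullet>c ?u = (\<Sum>k<d. (\<rho> *\<^sub>v ?u) $ k * cnj (U $$ (k,i)))"
      using u Uc i by (auto simp: scalar_prod_def atLeast0LessThan intro!: sum.cong)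
    also have "\<dots> = (\<Sum>k<d. cnj (U $$ (k,i)) * (\<rho> * U) $$ (k,i))"
      using rhoC Uc i by (intro sum.cong refl) (simp add: mult.commute)
    also have "\<dots> = (mat_adjoint U * (\<rho> * U)) $$ (i,i)"
      using rhoC Uc i by (subst mult_index[of _ d d _ d]) (auto intro!: sum.cong)
    also have "\<dots> = complex_of_real (Lam i)" unfolding UrU Dg_def using i by (simp add: mat_diag_def)
    finally have "Re ((\<rho> *\<^sub>v ?u) \<bullet>c ?u) = Lam i" by simp
    then show ?thesis using psd[OF u] by simp
  qed
  have Lam1: "(\<Sum>i<d. Lam i) = 1"
  proof -
    have "complex_of_real (\<Sum>i<d. Lam i) = (\<Sum>i<d. complex_of_real (Lam i))" by simp
    also have "\<dots> = mtrace \<rho>" unfolding rho_eq Dg_def by (rule mtrace_udu[OF Uc UU, symmetric])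
    also have "\<dots> = 1" by (rule tr1)
    finally show ?thesis by (simp only: of_real_eq_1_iff)
  qed
  have rhs: "Re (mtrace (spec_proj_ge \<rho> (complex_of_real c \<cdot>\<^sub>m 1\<^sub>m d) * (\<rho> - complex_of_real c \<cdot>\<^sub>m 1\<^sub>m d)))
     = (\<Sum>l<d. max (Lam l - c) 0)"
  proof -
    have "spec_proj_ge \<rho> (complex_of_real c \<cdot>\<^sub>m 1\<^sub>m d) * (\<rho> - complex_of_real c \<cdot>\<^sub>m 1\<^sub>m d)
        = spec_proj_nonneg X * X" unfolding spec_proj_ge_def X_def by simp
    also have "\<dots> = U * mat_diag d (\<lambda>i. (if lam i \<ge> 0 then 1 else 0) * complex_of_real (lam i)) * mat_adjoint U"
      unfolding Peq by (subst Xeq) (rule udu_mult[OF Uc UU])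
    finally have "mtrace (spec_proj_ge \<rho> (complex_of_real c \<cdot>\<^sub>m 1\<^sub>m d) * (\<rho> - complex_of_real c \<cdot>\<^sub>m 1\<^sub>m d))
        = (\<Sum>l<d. (if lam l \<ge> 0 then 1 else 0) * complex_of_real (lam l))"
      using mtrace_udu[OF Uc UU] by simp
    then show ?thesis by (auto simp: Re_sum Lam_def max_def intro!: sum.cong)
  qed
  define Cs' where "Cs' = map (\<lambda>C. C * U) Cs"
  define Ds' where "Ds' = map (\<lambda>D. mat_adjoint U * D) Ds"
  have Cs': "cptp_kraus d M Cs'" unfolding Cs'_def by (rule cptp_right[OF enc Uc UU])
  have Ds': "cptp_kraus M d Ds'" unfolding Ds'_def by (rule cptp_left[OF dec Ua]) (use UUt in simp)
  have Dcar: "D \<in> carrier_mat d M" if "D \<in> set Ds" for D using dec that unfolding cptp_kraus_def by auto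
  have Ccar: "C \<in> carrier_mat M d" if "C \<in> set Cs" for C using enc that unfolding cptp_kraus_def by auto
  have tr_DC: "mtrace (D * C * \<rho>) = (\<Sum>l<d. complex_of_real (Lam l) *
       (\<Sum>m<M. (mat_adjoint U * D) $$ (l,m) * (C * U) $$ (m,l)))"
    if D: "D \<in> set Ds" and C: "C \<in> set Cs" for D C
  proof -
    have DC: "D * C \<in> carrier_mat d d" using Dcar[OF D] Ccar[OF C] by auto
    have "mtrace (D * C * \<rho>) = (\<Sum>l<d. complex_of_real (Lam l) *
        (\<Sum>k<d. \<Sum>i<d. cnj (U $$ (i,l)) * (D * C) $$ (i,k) * U $$ (k,l)))"
      unfolding rho_eq Dg_def by (rule mtrace_conj[OF Uc DC])
    also have "\<dots> = (\<Sum>l<d. complex_of_real (Lam l) *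
       (\<Sum>m<M. (mat_adjoint U * D) $$ (l,m) * (C * U) $$ (m,l)))"
      by (intro sum.cong refl) (simp add: conj_index[OF Uc Dcar[OF D] Ccar[OF C]])
    finally show ?thesis .
  qed
  have lhs: "ent_fidelity \<rho> (kraus_compose Ds Cs)
     = (\<Sum>D\<leftarrow>Ds'. \<Sum>C\<leftarrow>Cs'. (cmod (\<Sum>l<d. complex_of_real (Lam l) * (\<Sum>m<M. D $$ (l,m) * C $$ (m,l))))^2)"
  proof -
    have "ent_fidelity \<rho> (kraus_compose Ds Cs) = (\<Sum>D\<leftarrow>Ds. \<Sum>C\<leftarrow>Cs. (cmod (mtrace (D * C * \<rho>)))^2)"
      unfolding ent_fidelity_def kraus_compose_def by (rule sl_concat)
    also have "\<dots> = (\<Sum>D\<leftarrow>Ds. \<Sum>C\<leftarrow>Cs. (cmod (\<Sum>l<d. complex_of_real (Lam l) *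
       (\<Sum>m<M. (mat_adjoint U * D) $$ (l,m) * (C * U) $$ (m,l))))^2)"
      by (intro sl_cong) (simp add: tr_DC)
    also have "\<dots> = (\<Sum>D\<leftarrow>Ds'. \<Sum>C\<leftarrow>Cs'. (cmod (\<Sum>l<d. complex_of_real (Lam l) * (\<Sum>m<M. D $$ (l,m) * C $$ (m,l))))^2)"
      unfolding Ds'_def Cs'_def by (simp add: o_def)
    finally show ?thesis .
  qed
  have "ent_fidelity \<rho> (kraus_compose Ds Cs) \<le> (\<Sum>l<d. max (Lam l - c) 0) + c * real M"
    unfolding lhs by (rule core[OF Cs' Ds' Lam0 Lam1 c0])
  then have "ent_fidelity \<rho> (kraus_compose Ds Cs)
    \<le> Re (mtrace (spec_proj_ge \<rho> (complex_of_real c \<cdot>\<^sub>m 1\<^sub>m d) * (\<rho> - complex_of_real c \<cdot>\<^sub>m 1\<^sub>m d))) + c * real M"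
    unfolding rhs .
  then show ?thesis unfolding c_def .
qed

end
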